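(* Let $F=(C_1,\dots,C_m)$ be a flag of almost affine codes of length $n$, $E=\{1,\dots,n\}$, and let $r_i$ be the rank function of the matroid associated to $C_i$. Define $\eta_F=\sum_{i=1}^m(-1)^{m-i}r_i^*$, $\theta_F=\sum_{i=1}^m(-1)^{i+1}\overline{r_i}$, $\pi_F=\sum_{i=1}^m(-1)^{m-i}\overline{r_i^*}$, and $\rho_F=\sum_{i=1}^m(-1)^{i+1}r_i$. Then $(E,\eta_F)$, $(E,\theta_F)$ and $(E,\pi_F)$ are demi-matroids, and moreover $\theta_F=\overline{\rho_F}$; $\eta_F=\overline{\rho_F}$ if $m$ is even and $\eta_F=\rho_F^*$ if $m$ is odd; $\pi_F=\rho_F$ if $m$ is even and $\pi_F=(\overline{\rho_F})^*$ if $m$ is odd.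
   Context: An almost affine code over a finite alphabet $A$ of length $n$ and dimension $k$ is a subset $C\subseteq A^n$ with $|C|=|A|^k$ such that for every $X\subseteq E$, $\log_{|A|}|C_X|$ is a nonnegative integer ($C_X$ = projection onto coordinates $X$); its associated matroid has rank function $r(X)=\log_{|A|}|C_X|$. A flag of almost affine codes is a sequence $(C_1,\dots,C_m)$ of almost affine codes over the same alphabet and of the same length with each $C_{j+1}\subseteq C_j$ itself an almost affine code. A demi-matroid is $(E,r)$ with $r:2^E\to\mathbb{N}$, $r(\emptyset)=0$, and $r(X)\le r(X\cup\{x\})\le r(X)+1$. For any function $r$ on $2^E$: $r^*(X)=|X|+r(E\setminus X)-r(E)$ and $\overline{r}(X)=r(E)-r(E\setminus X)$. *)

theory Defs
  imports Main "HOL-Library.FuncSet"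
begin

text \<open>Words of length n over the alphabet A are functions E = {1..n} -> A
  (extensional, i.e. undefined outside E).\<close>

definition ground :: "nat \<Rightarrow> nat set" where
  "ground n = {1..n}"

definition proj :: "(nat \<Rightarrow> 'a) set \<Rightarrow> nat set \<Rightarrow> (nat \<Rightarrow> 'a) set" where
  "proj C X = (\<lambda>c. restrict c X) ` C"

definition almost_affine :: "'a set \<Rightarrow> nat \<Rightarrow> nat \<Rightarrow> (nat \<Rightarrow> 'a) set \<Rightarrow> bool" where
  "almost_affine A n k C \<longleftrightarrow>
     finite A \<and> card A \<ge> 2 \<and>
     C \<subseteq> PiE (ground n) (\<lambda>_. A) \<and>
     card C = card A ^ k \<and>
     (\<forall>X \<subseteq> ground n. \<exists>r::nat. card (proj C X) = card A ^ r)"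

definition code_rank :: "'a set \<Rightarrow> (nat \<Rightarrow> 'a) set \<Rightarrow> nat set \<Rightarrow> int" where
  "code_rank A C X = int (THE r::nat. card (proj C X) = card A ^ r)"

definition flag_aac :: "'a set \<Rightarrow> nat \<Rightarrow> nat \<Rightarrow> (nat \<Rightarrow> (nat \<Rightarrow> 'a) set) \<Rightarrow> bool" where
  "flag_aac A n m C \<longleftrightarrow> m \<ge> 1 \<and>
     (\<forall>i\<in>{1..m}. \<exists>k. almost_affine A n k (C i)) \<and>
     (\<forall>j. 1 \<le> j \<and> j < m \<longrightarrow> C (Suc j) \<subseteq> C j)"

definition demi_matroid :: "nat set \<Rightarrow> (nat set \<Rightarrow> int) \<Rightarrow> bool" where
  "demi_matroid E r \<longleftrightarrow> r {} = 0 \<and>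
     (\<forall>X \<subseteq> E. 0 \<le> r X \<and>
        (\<forall>x\<in>E. r X \<le> r (insert x X) \<and> r (insert x X) \<le> r X + 1))"

definition dualf :: "nat set \<Rightarrow> (nat set \<Rightarrow> int) \<Rightarrow> nat set \<Rightarrow> int" where
  "dualf E r X = int (card X) + r (E - X) - r E"

definition barf :: "nat set \<Rightarrow> (nat set \<Rightarrow> int) \<Rightarrow> nat set \<Rightarrow> int" where
  "barf E r X = r E - r (E - X)"

definition etaF :: "'a set \<Rightarrow> nat \<Rightarrow> nat \<Rightarrow> (nat \<Rightarrow> (nat \<Rightarrow> 'a) set) \<Rightarrow> nat set \<Rightarrow> int" where
  "etaF A n m C X = (\<Sum>i=1..m. (-1)^(m-i) * dualf (ground n) (code_rank A (C i)) X)"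

definition thetaF :: "'a set \<Rightarrow> nat \<Rightarrow> nat \<Rightarrow> (nat \<Rightarrow> (nat \<Rightarrow> 'a) set) \<Rightarrow> nat set \<Rightarrow> int" where
  "thetaF A n m C X = (\<Sum>i=1..m. (-1)^(i+1) * barf (ground n) (code_rank A (C i)) X)"

definition piF :: "'a set \<Rightarrow> nat \<Rightarrow> nat \<Rightarrow> (nat \<Rightarrow> (nat \<Rightarrow> 'a) set) \<Rightarrow> nat set \<Rightarrow> int" where
  "piF A n m C X = (\<Sum>i=1..m. (-1)^(m-i) * barf (ground n) (dualf (ground n) (code_rank A (C i))) X)"

definition rhoF :: "'a set \<Rightarrow> nat \<Rightarrow> nat \<Rightarrow> (nat \<Rightarrow> (nat \<Rightarrow> 'a) set) \<Rightarrow> nat set \<Rightarrow> int" where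
  "rhoF A n m C X = (\<Sum>i=1..m. (-1)^(i+1) * code_rank A (C i) X)"

end

theory Submission
  imports Defs
begin

lemma aa_basic:
  assumes "almost_affine A n k C"
  shows "card A > 1" "finite C" "C \<noteq> {}" "C \<subseteq> PiE (ground n) (\<lambda>_. A)"
proof -
  show q: "card A > 1" using assms unfolding almost_affine_def by auto
  have "card C = card A ^ k" using assms unfolding almost_affine_def by auto
  hence "card C > 0" using q by simp
  thus "finite C" "C \<noteq> {}" using card_gt_0_iff by blast+
  show "C \<subseteq> PiE (ground n) (\<lambda>_. A)" using assms unfolding almost_affine_def by auto
qed

lemma cr_eq:
  assumes "almost_affine A n k C" "card (proj C X) = card A ^ r"
  shows "code_rank A C X = int r"
proof -
  have q: "card A > 1" using aa_basic[OF assms(1)] by simp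
  have "(THE r. card (proj C X) = card A ^ r) = r"
    apply (rule the_equality)
    using assms(2) apply simp
    using q assms(2) by (metis power_inject_exp)
  thus ?thesis unfolding code_rank_def by simp
qed

lemma cr_ex:
  assumes "almost_affine A n k C" "X \<subseteq> ground n"
  shows "\<exists>r. card (proj C X) = card A ^ r \<and> code_rank A C X = int r"
proof -
  obtain r where "card (proj C X) = card A ^ r" using assms unfolding almost_affine_def by blast
  thus ?thesis using cr_eq[OF assms(1)] by blast
qed

lemma proj_fin: "finite C \<Longrightarrow> finite (proj C X)"
  unfolding proj_def by simp

lemma proj_restr: "proj C X = (\<lambda>f. restrict f X) ` proj C (insert x X)"
  unfolding proj_def image_image by (simp add: Int_absorb1 subset_insertI)

lemma card_proj_mono:
  assumes "finite C"
  shows "card (proj C X) \<le> card (proj C (insert x X))"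
  by (metis proj_restr assms card_image_le proj_fin)

lemma proj_insert_sub:
  assumes "C \<subseteq> PiE (ground n) (\<lambda>_. A)" "x \<in> ground n"
  shows "proj C (insert x X) \<subseteq> (\<lambda>(f,a). f(x:=a)) ` (proj C X \<times> A)"
proof
  fix g assume "g \<in> proj C (insert x X)"
  then obtain c where c: "c \<in> C" "g = restrict c (insert x X)" unfolding proj_def by auto
  have "c x \<in> A" using c(1) assms by (auto simp: PiE_iff)
  moreover have "g = (restrict c X)(x := c x)" using c(2) by (auto simp: restrict_def)
  moreover have "restrict c X \<in> proj C X" using c(1) unfolding proj_def by auto
  ultimately show "g \<in> (\<lambda>(f,a). f(x:=a)) ` (proj C X \<times> A)" by force
qed

lemma card_proj_ins_le:
  assumes "C \<subseteq> PiE (ground n) (\<lambda>_. A)" "x \<in> ground n" "finite C" "finite A"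
  shows "card (proj C (insert x X)) \<le> card (proj C X) * card A"
proof -
  have "card (proj C (insert x X)) \<le> card ((\<lambda>(f,a). f(x:=a)) ` (proj C X \<times> A))"
    by (rule card_mono) (use proj_insert_sub[OF assms(1,2)] proj_fin[OF assms(3)] assms(4) in auto)
  also have "\<dots> \<le> card (proj C X \<times> A)" by (rule card_image_le) (use proj_fin[OF assms(3)] assms(4) in auto)
  also have "\<dots> = card (proj C X) * card A" by (simp add: card_cartesian_product)
  finally show ?thesis .
qed

lemma quot_card:
  assumes "D \<subseteq> C" "finite C" "card (proj C (insert x X)) = card (proj C X)"
  shows "card (proj D (insert x X)) = card (proj D X)"
proof -
  let ?g = "\<lambda>f. restrict f X"
  have "card (?g ` proj C (insert x X)) = card (proj C (insert x X))"
    using assms(3) proj_restr[of C X x] by simp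
  hence inj: "inj_on ?g (proj C (insert x X))"
    using eq_card_imp_inj_on proj_fin[OF assms(2)] by blast
  have "proj D (insert x X) \<subseteq> proj C (insert x X)" using assms(1) unfolding proj_def by auto
  hence "inj_on ?g (proj D (insert x X))" using inj inj_on_subset by blast
  hence "card (?g ` proj D (insert x X)) = card (proj D (insert x X))" by (rule card_image)
  thus ?thesis using proj_restr[of D X x] by simp
qed

lemma rank_incr:
  assumes "almost_affine A n k C" "X \<subseteq> ground n" "x \<in> ground n"
  shows "code_rank A C X \<le> code_rank A C (insert x X) \<and>
         code_rank A C (insert x X) \<le> code_rank A C X + 1"
proof -
  note b = aa_basic[OF assms(1)]
  obtain a where a: "card (proj C X) = card A ^ a" "code_rank A C X = int a"
    using cr_ex[OF assms(1,2)] by blast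
  obtain c where c: "card (proj C (insert x X)) = card A ^ c" "code_rank A C (insert x X) = int c"
    using cr_ex[OF assms(1)] assms(2,3) by blast
  have "card A ^ a \<le> card A ^ c" using card_proj_mono[OF b(2), of X x] a c by simp
  hence "a \<le> c" using b(1) power_le_imp_le_exp by blast
  moreover have "card A ^ c \<le> card A ^ Suc a"
  proof -
    have h: "card (proj C (insert x X)) \<le> card (proj C X) * card A"
      by (rule card_proj_ins_le[OF b(4) assms(3) b(2)]) (use assms(1) in \<open>simp add: almost_affine_def\<close>)
    thus ?thesis using a c by (simp add: mult.commute)
  qed
  hence "c \<le> Suc a" using b(1) power_le_imp_le_exp by blast
  ultimately show ?thesis using a c by simp
qed

lemma rank_quot:
  assumes "almost_affine A n k C" "almost_affine A n k' D" "D \<subseteq> C"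
    "X \<subseteq> ground n" "x \<in> ground n"
  shows "code_rank A D (insert x X) - code_rank A D X \<le> code_rank A C (insert x X) - code_rank A C X"
proof (cases "code_rank A C (insert x X) = code_rank A C X")
  case True
  obtain a where a: "card (proj C X) = card A ^ a" "code_rank A C X = int a"
    using cr_ex[OF assms(1,4)] by blast
  obtain c where c: "card (proj C (insert x X)) = card A ^ c" "code_rank A C (insert x X) = int c"
    using cr_ex[OF assms(1)] assms(4,5) by blast
  have "card (proj D (insert x X)) = card (proj D X)"
    using quot_card[OF assms(3) aa_basic(2)[OF assms(1)]] a c True by simp
  moreover obtain a' where a': "card (proj D X) = card A ^ a'" "code_rank A D X = int a'"
    using cr_ex[OF assms(2,4)] by blast
  ultimately have "code_rank A D (insert x X) = int a'" using cr_eq[OF assms(2)] by simp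
  thus ?thesis using True a' by simp
next
  case False
  thus ?thesis using rank_incr[OF assms(1,4,5)] rank_incr[OF assms(2,4,5)] by simp
qed

lemma alt:
  fixes d :: "nat \<Rightarrow> int"
  assumes "\<forall>i\<in>{1..m}. d i = 0 \<or> d i = 1" "\<forall>i. 1 \<le> i \<and> i < m \<longrightarrow> d (Suc i) \<le> d i"
  shows "((\<Sum>i=1..m. (-1)^(i+1) * d i) = 0 \<or> (\<Sum>i=1..m. (-1)^(i+1) * d i) = 1) \<and>
         (1 \<le> m \<longrightarrow> d m = 1 \<longrightarrow> (\<Sum>i=1..m. (-1)^(i+1) * d i) = (if odd m then 1 else 0))"
  using assms
proof (induction m)
  case 0
  then show ?case by simp
next
  case (Suc m)
  have IH: "((\<Sum>i=1..m. (-1)^(i+1) * d i) = 0 \<or> (\<Sum>i=1..m. (-1)^(i+1) * d i) = 1) \<and>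
         (1 \<le> m \<longrightarrow> d m = 1 \<longrightarrow> (\<Sum>i=1..m. (-1)^(i+1) * d i) = (if odd m then 1 else 0))"
    using Suc.IH Suc.prems by auto
  have s: "(\<Sum>i=1..Suc m. (-1)^(i+1) * d i) = (\<Sum>i=1..m. (-1)^(i+1) * d i) + (-1)^(m+2) * d (Suc m)"
    by simp
  have dS: "d (Suc m) = 0 \<or> d (Suc m) = 1" using Suc.prems(1) by auto
  show ?case
  proof (cases "d (Suc m) = 0")
    case True
    then show ?thesis using s IH by simp
  next
    case False
    hence d1: "d (Suc m) = 1" using dS by simp
    show ?thesis
    proof (cases "m = 0")
      case True then show ?thesis using d1 by simp
    next
      case False
      hence "d m \<ge> 1" using d1 Suc.prems(2)[rule_format, of m] by simp
      moreover have "d m = 0 \<or> d m = 1" using Suc.prems(1) False by simp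
      ultimately have "d m = 1" by auto
      hence "(\<Sum>i=1..m. (-1)^(i+1) * d i) = (if odd m then 1 else 0)" using IH False by simp
      then show ?thesis using s d1 by auto
    qed
  qed
qed

definition incr :: "nat set \<Rightarrow> (nat set \<Rightarrow> int) \<Rightarrow> bool" where
  "incr E r \<longleftrightarrow> (\<forall>X \<subseteq> E. \<forall>x\<in>E. r X \<le> r (insert x X) \<and> r (insert x X) \<le> r X + 1)"

lemma incr_grow:
  assumes "incr E r" "Y \<subseteq> E" "finite Z" "Z \<subseteq> E"
  shows "r Y \<le> r (Y \<union> Z) \<and> r (Y \<union> Z) \<le> r Y + int (card Z)"
  using assms(3,4)
proof (induction Z rule: finite_induct)
  case empty then show ?case by simp
next
  case (insert x F)
  have "Y \<union> F \<subseteq> E" "x \<in> E" using insert assms(2) by auto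
  hence "r (Y \<union> F) \<le> r (insert x (Y \<union> F)) \<and> r (insert x (Y \<union> F)) \<le> r (Y \<union> F) + 1"
    using assms(1) unfolding incr_def by blast
  then show ?case using insert by simp
qed

lemma dm_of:
  assumes "incr E r" "r {} = 0" "finite E"
  shows "demi_matroid E r"
  unfolding demi_matroid_def
proof (intro conjI allI impI ballI)
  show "r {} = 0" by fact
  fix X assume X: "X \<subseteq> E"
  show "0 \<le> r X" using incr_grow[OF assms(1), of "{}" X] X assms finite_subset by auto
  fix x assume "x \<in> E"
  thus "r X \<le> r (insert x X)" "r (insert x X) \<le> r X + 1" using assms(1) X unfolding incr_def by auto
qed

lemma incr_bar:
  assumes "incr E r"
  shows "incr E (barf E r)"
  unfolding incr_def barf_def
proof (intro allI impI ballI)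
  fix X x assume X: "X \<subseteq> E" and x: "x \<in> E"
  show "r E - r (E - X) \<le> r E - r (E - insert x X) \<and> r E - r (E - insert x X) \<le> r E - r (E - X) + 1"
  proof (cases "x \<in> X")
    case True then show ?thesis by (simp add: insert_absorb)
  next
    case False
    hence "E - X = insert x (E - insert x X)" using x by auto
    moreover have "r (E - insert x X) \<le> r (insert x (E - insert x X)) \<and>
        r (insert x (E - insert x X)) \<le> r (E - insert x X) + 1"
      using assms x unfolding incr_def by blast
    ultimately show ?thesis by simp
  qed
qed

lemma incr_dual:
  assumes "incr E r" "finite E"
  shows "incr E (dualf E r)"
  unfolding incr_def dualf_def
proof (intro allI impI ballI)
  fix X x assume X: "X \<subseteq> E" and x: "x \<in> E"
  have fX: "finite X" using X assms(2) finite_subset by blast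
  show "int (card X) + r (E - X) - r E \<le> int (card (insert x X)) + r (E - insert x X) - r E \<and>
        int (card (insert x X)) + r (E - insert x X) - r E \<le> int (card X) + r (E - X) - r E + 1"
  proof (cases "x \<in> X")
    case True then show ?thesis by (simp add: insert_absorb)
  next
    case False
    hence e: "E - X = insert x (E - insert x X)" using x by auto
    have "r (E - insert x X) \<le> r (insert x (E - insert x X)) \<and>
        r (insert x (E - insert x X)) \<le> r (E - insert x X) + 1"
      using assms x unfolding incr_def by blast
    moreover have "card (insert x X) = card X + 1" using False fX by simp
    ultimately show ?thesis using e by simp
  qed
qed

lemma dm_transfer:
  assumes "\<forall>X \<subseteq> E. f X = g X" "demi_matroid E g"
  shows "demi_matroid E f"
proof -
  have "f {} = g {}" using assms(1) by blast
  moreover have "\<forall>X\<subseteq>E. \<forall>x\<in>E. f X = g X \<and> f (insert x X) = g (insert x X)"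
    using assms(1) by blast
  ultimately show ?thesis using assms(2) unfolding demi_matroid_def
  proof -
    assume h: "f {} = g {}" "\<forall>X\<subseteq>E. \<forall>x\<in>E. f X = g X \<and> f (insert x X) = g (insert x X)"
      "g {} = 0 \<and> (\<forall>X\<subseteq>E. 0 \<le> g X \<and> (\<forall>x\<in>E. g X \<le> g (insert x X) \<and> g (insert x X) \<le> g X + 1))"
    have fg: "f X = g X" if "X \<subseteq> E" for X using assms(1) that by blast
    have fg2: "f (insert x X) = g (insert x X)" if "X \<subseteq> E" "x \<in> E" for X x
      using assms(1) that by blast
    show "f {} = 0 \<and> (\<forall>X\<subseteq>E. 0 \<le> f X \<and> (\<forall>x\<in>E. f X \<le> f (insert x X) \<and> f (insert x X) \<le> f X + 1))"
      using h fg fg2 by simp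
  qed
qed

lemma sgn_swap:
  assumes "i \<le> m"
  shows "(-1::int)^(m-i) = (-1)^(m+1) * (-1)^(i+1)"
proof -
  have "m + 1 + (i + 1) = (m - i) + 2 * (i + 1)" using assms by simp
  hence "(-1::int)^(m+1) * (-1)^(i+1) = (-1)^((m - i) + 2 * (i + 1))" by (metis power_add)
  also have "\<dots> = (-1)^(m-i)" by (simp add: power_add power_mult)
  finally show ?thesis by simp
qed

theorem mainTheorem7:
  fixes A :: "'a set" and n m :: nat and C :: "nat \<Rightarrow> (nat \<Rightarrow> 'a) set"
  assumes "flag_aac A n m C"
  defines "E \<equiv> ground n"
  shows "demi_matroid E (etaF A n m C)
    \<and> demi_matroid E (thetaF A n m C)
    \<and> demi_matroid E (piF A n m C)
    \<and> (\<forall>X \<subseteq> E. thetaF A n m C X = barf E (rhoF A n m C) X)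
    \<and> (even m \<longrightarrow> (\<forall>X \<subseteq> E. etaF A n m C X = barf E (rhoF A n m C) X))
    \<and> (odd m \<longrightarrow> (\<forall>X \<subseteq> E. etaF A n m C X = dualf E (rhoF A n m C) X))
    \<and> (even m \<longrightarrow> (\<forall>X \<subseteq> E. piF A n m C X = rhoF A n m C X))
    \<and> (odd m \<longrightarrow> (\<forall>X \<subseteq> E. piF A n m C X = dualf E (barf E (rhoF A n m C)) X))"
proof -
  define r where "r i = code_rank A (C i)" for i
  define \<rho> where "\<rho> = rhoF A n m C"
  have rho: "\<rho> X = (\<Sum>i=1..m. (-1)^(i+1) * r i X)" for X
    unfolding \<rho>_def rhoF_def r_def by simp
  have finE: "finite E" unfolding E_def ground_def by simp
  have aa: "\<exists>k. almost_affine A n k (C i)" if "i \<in> {1..m}" for i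
    using assms(1) that unfolding flag_aac_def by blast
  have r0: "r i {} = 0" if ii: "i \<in> {1..m}" for i
  proof -
    obtain k where k: "almost_affine A n k (C i)" using aa[OF ii] by blast
    have "proj (C i) {} = {\<lambda>_. undefined}" using aa_basic(3)[OF k] unfolding proj_def
      by (auto simp: restrict_def)
    hence "card (proj (C i) {}) = card A ^ 0" by simp
    thus ?thesis using cr_eq[OF k, of "{}" 0] unfolding r_def by simp
  qed
  have rinc: "r i X \<le> r i (insert x X) \<and> r i (insert x X) \<le> r i X + 1"
    if hh: "i \<in> {1..m}" "X \<subseteq> E" "x \<in> E" for i X x
  proof -
    obtain k where k: "almost_affine A n k (C i)" using aa[OF hh(1)] by blast
    show ?thesis using rank_incr[OF k] hh unfolding r_def E_def by blast
  qed
  have rq: "r (Suc i) (insert x X) - r (Suc i) X \<le> r i (insert x X) - r i X"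
    if hh: "1 \<le> i" "i < m" "X \<subseteq> E" "x \<in> E" for i X x
  proof -
    obtain k where k: "almost_affine A n k (C i)" using aa[of i] hh by auto
    obtain k' where k': "almost_affine A n k' (C (Suc i))" using aa[of "Suc i"] hh by auto
    have "C (Suc i) \<subseteq> C i" using assms(1) hh unfolding flag_aac_def by blast
    thus ?thesis using rank_quot[OF k k'] hh unfolding r_def E_def by blast
  qed
  have rho0: "\<rho> {} = 0" unfolding rho using r0 by simp
  have rho_incr: "incr E \<rho>" unfolding incr_def
  proof (intro allI impI ballI)
    fix X x assume X: "X \<subseteq> E" and x: "x \<in> E"
    define d where "d i = r i (insert x X) - r i X" for i
    have "\<forall>i\<in>{1..m}. d i = 0 \<or> d i = 1" unfolding d_def using rinc X x by force
    moreover have "\<forall>i. 1 \<le> i \<and> i < m \<longrightarrow> d (Suc i) \<le> d i" unfolding d_def using rq X x by blast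
    ultimately have al: "(\<Sum>i=1..m. (-1)^(i+1) * d i) = 0 \<or> (\<Sum>i=1..m. (-1)^(i+1) * d i) = 1"
      using alt by blast
    have "\<rho> (insert x X) - \<rho> X = (\<Sum>i=1..m. (-1)^(i+1) * d i)"
      unfolding rho d_def by (simp add: sum_subtractf[symmetric] right_diff_distrib)
    thus "\<rho> X \<le> \<rho> (insert x X) \<and> \<rho> (insert x X) \<le> \<rho> X + 1" using al by auto
  qed
  have P: "(\<Sum>i=1..m. (-1::int)^(i+1)) = (if odd m then 1 else 0)"
  proof -
    have "m \<ge> 1" using assms(1) unfolding flag_aac_def by simp
    thus ?thesis using alt[of m "\<lambda>_. 1"] by simp
  qed
  have th: "\<forall>X \<subseteq> E. thetaF A n m C X = barf E \<rho> X"
    unfolding thetaF_def barf_def rho r_def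
    by (simp add: sum_subtractf[symmetric] right_diff_distrib E_def)
  have eta: "etaF A n m C X = (-1)^(m+1) * (int (card X) * (if odd m then 1 else 0) + \<rho> (E - X) - \<rho> E)" for X
  proof -
    have "etaF A n m C X = (\<Sum>i=1..m. (-1)^(m+1) * ((-1)^(i+1) * (int (card X) + r i (E - X) - r i E)))"
      unfolding etaF_def dualf_def r_def E_def
      by (rule sum.cong) (simp_all add: sgn_swap)
    also have "\<dots> = (-1)^(m+1) * (\<Sum>i=1..m. int (card X) * (-1)^(i+1) + (-1)^(i+1) * r i (E - X) - (-1)^(i+1) * r i E)"
      unfolding sum_distrib_left by (rule sum.cong) (simp_all add: algebra_simps)
    also have "\<dots> = (-1)^(m+1) * (int (card X) * (\<Sum>i=1..m. (-1::int)^(i+1)) + \<rho> (E - X) - \<rho> E)"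
      unfolding rho by (simp add: sum.distrib sum_subtractf sum_distrib_left sum_negf)
    finally show ?thesis using P by simp
  qed
  have pi: "piF A n m C X = (-1)^(m+1) * (int (card X) * (if odd m then 1 else 0) - \<rho> X)"
    if X: "X \<subseteq> E" for X
  proof -
    have cX: "int (card E) - int (card (E - X)) = int (card X)"
      using X finE by (simp add: card_Diff_subset card_mono finite_subset of_nat_diff)
    have EE: "E - (E - X) = X" using X by auto
    have "piF A n m C X = (\<Sum>i=1..m. (-1)^(m+1) * ((-1)^(i+1) * (int (card X) - r i X)))"
      unfolding piF_def
    proof (rule sum.cong)
      fix i assume i: "i \<in> {1..m}"
      have "barf (ground n) (dualf (ground n) (code_rank A (C i))) X = int (card X) - r i X"
        unfolding barf_def dualf_def E_def[symmetric] r_def[symmetric]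
        using cX EE r0[OF i] by simp
      thus "(-1) ^ (m - i) * barf (ground n) (dualf (ground n) (code_rank A (C i))) X =
         (-1)^(m+1) * ((-1)^(i+1) * (int (card X) - r i X))"
        using i by (simp add: sgn_swap)
    qed simp
    also have "\<dots> = (-1)^(m+1) * (\<Sum>i=1..m. int (card X) * (-1)^(i+1) - (-1)^(i+1) * r i X)"
      unfolding sum_distrib_left by (rule sum.cong) (simp_all add: algebra_simps)
    also have "\<dots> = (-1)^(m+1) * (int (card X) * (\<Sum>i=1..m. (-1::int)^(i+1)) - \<rho> X)"
      unfolding rho by (simp add: sum_subtractf sum_distrib_left sum_negf)
    finally show ?thesis using P by simp
  qed
  have e1: "even m \<longrightarrow> (\<forall>X \<subseteq> E. etaF A n m C X = barf E \<rho> X)"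
    using eta by (simp add: barf_def)
  have e2: "odd m \<longrightarrow> (\<forall>X \<subseteq> E. etaF A n m C X = dualf E \<rho> X)"
    using eta by (simp add: dualf_def)
  have p1: "even m \<longrightarrow> (\<forall>X \<subseteq> E. piF A n m C X = \<rho> X)"
    using pi by simp
  have p2: "odd m \<longrightarrow> (\<forall>X \<subseteq> E. piF A n m C X = dualf E (barf E \<rho>) X)"
    using pi rho0 by (simp add: dualf_def barf_def Diff_Diff_Int Int_absorb1 Int_absorb2)
  have dmr: "demi_matroid E \<rho>" using dm_of[OF rho_incr rho0 finE] .
  have dmb: "demi_matroid E (barf E \<rho>)"
    using dm_of[OF incr_bar[OF rho_incr] _ finE] by (simp add: barf_def)
  have dmd: "demi_matroid E (dualf E \<rho>)"
    using dm_of[OF incr_dual[OF rho_incr finE] _ finE] by (simp add: dualf_def)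
  have dmbd: "demi_matroid E (dualf E (barf E \<rho>))"
    using dm_of[OF incr_dual[OF incr_bar[OF rho_incr] finE] _ finE] by (simp add: dualf_def barf_def)
  have "demi_matroid E (etaF A n m C)"
    using dm_transfer e1 e2 dmb dmd by blast
  moreover have "demi_matroid E (thetaF A n m C)" using dm_transfer th dmb by blast
  moreover have "demi_matroid E (piF A n m C)" using dm_transfer p1 p2 dmr dmbd by blast
  ultimately show ?thesis using th e1 e2 p1 p2 unfolding \<rho>_def by blast
qed

end
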